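(* Let $\mathcal{G}$ be a MAG and let $H,H'$ be two heads whose maximal vertex is $i$. If $H\to^KH'$ and $H\to^LH'$, then $H\to^{K\cap L}H'$.
   Context: A MAG is an acyclic directed mixed graph (directed and bidirected edges, no directed cycles) with $\mathrm{sib}(v)\cap\mathrm{an}(v)=\emptyset$ for all $v$ and in which every nonadjacent pair is m-separated by some set. Vertices are numbered in a topological order (ancestors have smaller labels). $\mathrm{barren}_{\mathcal{G}'}(W)=\{w\in W:\mathrm{de}_{\mathcal{G}'}(w)\cap W=\{w\}\}$; a nonempty $H$ is a head if $\mathrm{barren}(H)=H$ and $H$ lies in one district (bidirected-connected component) of $\mathcal{G}_{\mathrm{an}(H)}$. For a head $H$ with maximal vertex $i$ and $\emptyset\ne K\subseteq H\setminus\{i\}$, write $H\to^KH'$ if $H'=\mathrm{barren}_{\mathcal{G}'}(\mathrm{dis}_{\mathcal{G}'}(i))$, where $\mathcal{G}'=\mathcal{G}_{\mathrm{an}(H)\setminus K}$ and $\mathrm{dis}_{\mathcal{G}'}(i)$ is the district of $i$ in $\mathcal{G}'$. *)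

theory Defs
  imports Main
begin

text \<open>A mixed graph on vertex set V (vertices are natural numbers), with directed
edges D (a pair (a,b) means a \<rightarrow> b) and bidirected edges B (a symmetric relation).\<close>

definition mixed_graph :: "nat set \<Rightarrow> (nat \<times> nat) set \<Rightarrow> (nat \<times> nat) set \<Rightarrow> bool" where
  "mixed_graph V D B \<longleftrightarrow> finite V \<and> D \<subseteq> V \<times> V \<and> B \<subseteq> V \<times> V \<and> sym B \<and> irrefl B"

definition anc :: "nat set \<Rightarrow> (nat \<times> nat) set \<Rightarrow> nat \<Rightarrow> nat set" where
  "anc V D v = {w \<in> V. (w, v) \<in> (D \<inter> V \<times> V)\<^sup>*}"

definition anc_set :: "nat set \<Rightarrow> (nat \<times> nat) set \<Rightarrow> nat set \<Rightarrow> nat set" where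
  "anc_set V D W = (\<Union>w\<in>W. anc V D w)"

definition desc :: "nat set \<Rightarrow> (nat \<times> nat) set \<Rightarrow> nat \<Rightarrow> nat set" where
  "desc V D v = {w \<in> V. (v, w) \<in> (D \<inter> V \<times> V)\<^sup>*}"

definition sib :: "nat set \<Rightarrow> (nat \<times> nat) set \<Rightarrow> nat \<Rightarrow> nat set" where
  "sib V B v = {w \<in> V. (v, w) \<in> B}"

definition adjacent :: "(nat \<times> nat) set \<Rightarrow> (nat \<times> nat) set \<Rightarrow> nat \<Rightarrow> nat \<Rightarrow> bool" where
  "adjacent D B a b \<longleftrightarrow> (a, b) \<in> D \<or> (b, a) \<in> D \<or> (a, b) \<in> B"

datatype edge_kind = Fwd | Bwd | Bid

definition step_ok :: "(nat \<times> nat) set \<Rightarrow> (nat \<times> nat) set \<Rightarrow> nat \<Rightarrow> edge_kind \<Rightarrow> nat \<Rightarrow> bool" where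
  "step_ok D B x e y \<longleftrightarrow>
     (case e of Fwd \<Rightarrow> (x, y) \<in> D | Bwd \<Rightarrow> (y, x) \<in> D | Bid \<Rightarrow> (x, y) \<in> B)"

definition is_path :: "nat set \<Rightarrow> (nat \<times> nat) set \<Rightarrow> (nat \<times> nat) set \<Rightarrow> nat list \<Rightarrow> edge_kind list \<Rightarrow> nat \<Rightarrow> nat \<Rightarrow> bool" where
  "is_path V D B vs es a b \<longleftrightarrow>
     length vs = Suc (length es) \<and> distinct vs \<and> set vs \<subseteq> V \<and>
     hd vs = a \<and> last vs = b \<and>
     (\<forall>k < length es. step_ok D B (vs ! k) (es ! k) (vs ! Suc k))"

text \<open>Inner vertex vs!k (0 < k < length es) is a collider iff both adjacent edges
have an arrowhead at it.\<close>
definition collider :: "edge_kind list \<Rightarrow> nat \<Rightarrow> bool" where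
  "collider es k \<longleftrightarrow> es ! (k - 1) \<in> {Fwd, Bid} \<and> es ! k \<in> {Bwd, Bid}"

definition m_connecting :: "nat set \<Rightarrow> (nat \<times> nat) set \<Rightarrow> (nat \<times> nat) set \<Rightarrow> nat set \<Rightarrow> nat list \<Rightarrow> edge_kind list \<Rightarrow> bool" where
  "m_connecting V D B Z vs es \<longleftrightarrow>
     (\<forall>k. 0 < k \<and> k < length es \<longrightarrow>
        (collider es k \<longrightarrow> vs ! k \<in> anc_set V D Z) \<and>
        (\<not> collider es k \<longrightarrow> vs ! k \<notin> Z))"

definition m_separated :: "nat set \<Rightarrow> (nat \<times> nat) set \<Rightarrow> (nat \<times> nat) set \<Rightarrow> nat \<Rightarrow> nat \<Rightarrow> nat set \<Rightarrow> bool" where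
  "m_separated V D B a b Z \<longleftrightarrow> a \<notin> Z \<and> b \<notin> Z \<and> Z \<subseteq> V \<and>
     \<not> (\<exists>vs es. is_path V D B vs es a b \<and> m_connecting V D B Z vs es)"

definition MAG :: "nat set \<Rightarrow> (nat \<times> nat) set \<Rightarrow> (nat \<times> nat) set \<Rightarrow> bool" where
  "MAG V D B \<longleftrightarrow> mixed_graph V D B \<and>
     (\<forall>v\<in>V. (v, v) \<notin> D\<^sup>+) \<and>
     (\<forall>v\<in>V. sib V B v \<inter> anc V D v = {}) \<and>
     (\<forall>a\<in>V. \<forall>b\<in>V. a \<noteq> b \<and> \<not> adjacent D B a b \<longrightarrow> (\<exists>Z. m_separated V D B a b Z))"

definition topological :: "(nat \<times> nat) set \<Rightarrow> bool" where
  "topological D \<longleftrightarrow> (\<forall>(a, b) \<in> D. a < b)"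

definition restr :: "(nat \<times> nat) set \<Rightarrow> nat set \<Rightarrow> (nat \<times> nat) set" where
  "restr E A = E \<inter> A \<times> A"

definition barren :: "nat set \<Rightarrow> (nat \<times> nat) set \<Rightarrow> nat set \<Rightarrow> nat set" where
  "barren V D W = {w \<in> W. desc V D w \<inter> W = {w}}"

definition dis :: "nat set \<Rightarrow> (nat \<times> nat) set \<Rightarrow> nat \<Rightarrow> nat set" where
  "dis V B v = {w \<in> V. (v, w) \<in> (B \<inter> V \<times> V)\<^sup>*}"

definition head :: "nat set \<Rightarrow> (nat \<times> nat) set \<Rightarrow> (nat \<times> nat) set \<Rightarrow> nat set \<Rightarrow> bool" where
  "head V D B H \<longleftrightarrow> H \<noteq> {} \<and> H \<subseteq> V \<and> barren V D H = H \<and>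
     (let A = anc_set V D H in \<exists>v\<in>A. H \<subseteq> dis A (restr B A) v)"

definition head_step :: "nat set \<Rightarrow> (nat \<times> nat) set \<Rightarrow> (nat \<times> nat) set \<Rightarrow> nat set \<Rightarrow> nat set \<Rightarrow> nat set \<Rightarrow> bool" where
  "head_step V D B H K H' \<longleftrightarrow> head V D B H \<and> K \<noteq> {} \<and> K \<subseteq> H - {Max H} \<and>
     (let A = anc_set V D H - K in
      H' = barren A (restr D A) (dis A (restr B A) (Max H)))"

end

theory Submission
  imports Defs
begin

lemma trancl_less:
  assumes "topological D" "(a, b) \<in> (D \<inter> X)\<^sup>+"
  shows "a < b"
  using assms(2)
proof (induction rule: trancl_induct)
  case (base y) then show ?case using assms(1) unfolding topological_def by auto
next
  case (step y z) then show ?case using assms(1) unfolding topological_def by fastforce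
qed

lemma rtrancl_in_X:
  assumes "(a, b) \<in> (R \<inter> X \<times> X)\<^sup>*" "a \<in> X"
  shows "b \<in> X"
  using assms by (induction rule: rtrancl_induct) auto

lemma dis_restr: "dis X (restr B X) v = {w \<in> X. (v, w) \<in> (B \<inter> X \<times> X)\<^sup>*}"
  unfolding dis_def restr_def by (simp add: Int_assoc)

lemma desc_restr: "desc X (restr D X) v = {w \<in> X. (v, w) \<in> (D \<inter> X \<times> X)\<^sup>*}"
  unfolding desc_def restr_def by (simp add: Int_assoc)

lemma rt_mono: "X \<subseteq> Y \<Longrightarrow> (B \<inter> X \<times> X)\<^sup>* \<subseteq> (B \<inter> Y \<times> Y)\<^sup>*"
  by (rule rtrancl_mono) auto

lemma barren_sink:
  assumes top: "topological D" and bar: "barren V D H = H" and HV: "H \<subseteq> V"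
    and h: "h \<in> H" and p: "(h, y) \<in> (D \<inter> A \<times> A)\<^sup>*" and A: "A = anc_set V D H"
  shows "y = h"
proof (rule ccontr)
  assume ne: "y \<noteq> h"
  have AV: "A \<subseteq> V" using A unfolding anc_set_def anc_def by auto
  have t: "(h, y) \<in> (D \<inter> A \<times> A)\<^sup>+" using rtranclD[OF p] ne by blast
  then have yA: "y \<in> A" by (induction rule: trancl_induct) auto
  then obtain h' where h': "h' \<in> H" "(y, h') \<in> (D \<inter> V \<times> V)\<^sup>*"
    using A unfolding anc_set_def anc_def by auto
  have "D \<inter> A \<times> A \<subseteq> D \<inter> V \<times> V" using AV by auto
  with t have "(h, y) \<in> (D \<inter> V \<times> V)\<^sup>+" using trancl_mono by blast
  with h' have t2: "(h, h') \<in> (D \<inter> V \<times> V)\<^sup>+" by auto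
  then have "h < h'" using trancl_less[OF top] by blast
  moreover have "h' \<in> desc V D h" using t2 h' HV unfolding desc_def by auto
  moreover have "desc V D h \<inter> H = {h}" using bar h unfolding barren_def by blast
  moreover have "h' \<in> desc V D h \<inter> H" using h' calculation(2) by blast
  ultimately show False by auto
qed

lemma dis_sub:
  assumes "S = {w \<in> Y. (i, w) \<in> (B \<inter> Y \<times> Y)\<^sup>*}" "S \<subseteq> X" "X \<subseteq> Y" "i \<in> X"
  shows "{w \<in> X. (i, w) \<in> (B \<inter> X \<times> X)\<^sup>*} = S"
proof
  show "{w \<in> X. (i, w) \<in> (B \<inter> X \<times> X)\<^sup>*} \<subseteq> S"
    using assms rt_mono[OF assms(3), of B] by auto
  have "(i, y) \<in> (B \<inter> X \<times> X)\<^sup>*" if "(i, y) \<in> (B \<inter> Y \<times> Y)\<^sup>*" for y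
    using that
  proof (induction rule: rtrancl_induct)
    case base then show ?case by simp
  next
    case (step y z)
    have "(i, z) \<in> (B \<inter> Y \<times> Y)\<^sup>*" using step by (meson rtrancl.rtrancl_into_rtrancl)
    then have "z \<in> S" using step assms(1) by auto
    then have "z \<in> X" using assms(2) by auto
    moreover have "y \<in> X" using rtrancl_in_X[OF step.IH assms(4)] .
    ultimately show ?case using step by (meson IntI mem_Sigma_iff rtrancl.rtrancl_into_rtrancl IntD1)
  qed
  then show "S \<subseteq> {w \<in> X. (i, w) \<in> (B \<inter> X \<times> X)\<^sup>*}" using assms by auto
qed

theorem lemmaC1:
  fixes V :: "nat set" and D B :: "(nat \<times> nat) set" and H H' K L :: "nat set" and i :: nat
  assumes "MAG V D B" and "topological D"
    and "head V D B H" and "head V D B H'"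
    and "Max H = i" and "Max H' = i"
    and "head_step V D B H K H'" and "head_step V D B H L H'"
  shows "head_step V D B H (K \<inter> L) H'"
proof -
  note top = assms(2)
  have fin: "finite V" using assms(1) unfolding MAG_def mixed_graph_def by auto
  have symB: "sym B" using assms(1) unfolding MAG_def mixed_graph_def by auto
  have hH: "H \<noteq> {}" "H \<subseteq> V" "barren V D H = H"
    and hd: "\<exists>v\<in>anc_set V D H. H \<subseteq> dis (anc_set V D H) (restr B (anc_set V D H)) v"
    using assms(3) unfolding head_def Let_def by auto
  have finH: "finite H" using hH(2) fin finite_subset by auto
  have iH: "i \<in> H" using Max_in[OF finH hH(1)] assms(5) by simp
  define A where "A = anc_set V D H"
  have AV: "A \<subseteq> V" unfolding A_def anc_set_def anc_def by auto
  have HA: "H \<subseteq> A" using hH(2) unfolding A_def anc_set_def anc_def by auto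
  have Hd: "H \<subseteq> {w \<in> A. (i, w) \<in> (B \<inter> A \<times> A)\<^sup>*}"
  proof -
    obtain v where v: "v \<in> A" "H \<subseteq> {w \<in> A. (v, w) \<in> (B \<inter> A \<times> A)\<^sup>*}"
      using hd unfolding A_def[symmetric] dis_restr by auto
    have "sym (B \<inter> A \<times> A)" using symB unfolding sym_def by auto
    then have s: "sym ((B \<inter> A \<times> A)\<^sup>*)" by (rule sym_rtrancl)
    have "(v, i) \<in> (B \<inter> A \<times> A)\<^sup>*" using v iH by auto
    then have "(i, v) \<in> (B \<inter> A \<times> A)\<^sup>*" using s unfolding sym_def by blast
    then show ?thesis using v by (auto intro: rtrancl_trans)
  qed
  have sink: "y = h" if "h \<in> H" "(h, y) \<in> (D \<inter> A \<times> A)\<^sup>*" for h y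
    using barren_sink[OF top hH(3) hH(2) that A_def] .
  have stepK: "K \<noteq> {}" "K \<subseteq> H - {i}" "H' = barren (A - K) (restr D (A - K)) (dis (A - K) (restr B (A - K)) i)"
    using assms(7) assms(5) unfolding head_step_def Let_def A_def by auto
  have stepL: "L \<noteq> {}" "L \<subseteq> H - {i}" "H' = barren (A - L) (restr D (A - L)) (dis (A - L) (restr B (A - L)) i)"
    using assms(8) assms(5) unfolding head_step_def Let_def A_def by auto
  define DK where "DK = {w \<in> A - K. (i, w) \<in> (B \<inter> (A - K) \<times> (A - K))\<^sup>*}"
  define DL where "DL = {w \<in> A - L. (i, w) \<in> (B \<inter> (A - L) \<times> (A - L))\<^sup>*}"
  have H'K: "H' = barren (A - K) (restr D (A - K)) DK" using stepK(3) unfolding dis_restr DK_def .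
  have H'L: "H' = barren (A - L) (restr D (A - L)) DL" using stepL(3) unfolding dis_restr DL_def .
  have inbar: "l \<in> barren (A - X) (restr D (A - X)) S" if "l \<in> H" "l \<in> S" "S \<subseteq> A - X" for l X S
  proof -
    have "desc (A - X) (restr D (A - X)) l \<inter> S = {l}"
    proof
      show "desc (A - X) (restr D (A - X)) l \<inter> S \<subseteq> {l}"
      proof
        fix w assume w: "w \<in> desc (A - X) (restr D (A - X)) l \<inter> S"
        then have "(l, w) \<in> (D \<inter> (A - X) \<times> (A - X))\<^sup>*" unfolding desc_restr by auto
        then have "(l, w) \<in> (D \<inter> A \<times> A)\<^sup>*" using rt_mono[of "A - X" A D] by auto
        then show "w \<in> {l}" using sink that(1) by auto
      qed
      show "{l} \<subseteq> desc (A - X) (restr D (A - X)) l \<inter> S" using that unfolding desc_restr by auto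
    qed
    then show ?thesis using that unfolding barren_def by auto
  qed
  have DKs: "DK \<subseteq> A - K" unfolding DK_def by auto
  have DLs: "DL \<subseteq> A - L" unfolding DL_def by auto
  have LDK: "L \<inter> DK = {}"
  proof (rule ccontr)
    assume "L \<inter> DK \<noteq> {}"
    then obtain l where l: "l \<in> L" "l \<in> DK" by auto
    then have "l \<in> H'" using inbar[of l DK K] DKs stepL(2) H'K by auto
    moreover have "H' \<subseteq> DL" unfolding H'L barren_def by auto
    ultimately show False using l DLs by auto
  qed
  have KDL: "K \<inter> DL = {}"
  proof (rule ccontr)
    assume "K \<inter> DL \<noteq> {}"
    then obtain l where l: "l \<in> K" "l \<in> DL" by auto
    then have "l \<in> H'" using inbar[of l DL L] DLs stepK(2) H'L by auto
    moreover have "H' \<subseteq> DK" unfolding H'K barren_def by auto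
    ultimately show False using l DKs by auto
  qed
  have iX: "i \<in> A - (K \<union> L)" using iH HA stepK(2) stepL(2) by auto
  have e1: "{w \<in> A - (K \<union> L). (i, w) \<in> (B \<inter> (A - (K \<union> L)) \<times> (A - (K \<union> L)))\<^sup>*} = DK"
    by (rule dis_sub[OF DK_def]) (use DKs LDK iX in auto)
  have e2: "{w \<in> A - (K \<union> L). (i, w) \<in> (B \<inter> (A - (K \<union> L)) \<times> (A - (K \<union> L)))\<^sup>*} = DL"
    by (rule dis_sub[OF DL_def]) (use DLs KDL iX in auto)
  have DKL: "DK = DL" using e1 e2 by simp
  define M where "M = K \<inter> L"
  have DM: "{w \<in> A - M. (i, w) \<in> (B \<inter> (A - M) \<times> (A - M))\<^sup>*} = DK"
  proof
    have "(i, y) \<in> (B \<inter> (A - M) \<times> (A - M))\<^sup>* \<Longrightarrow> y \<in> DK" for y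
    proof (induction rule: rtrancl_induct)
      case base then show ?case using iX unfolding DK_def by auto
    next
      case (step y z)
      show ?case
      proof (cases "z \<in> K")
        case False
        then have "(i, z) \<in> (B \<inter> (A - K) \<times> (A - K))\<^sup>*" using step DKs
          unfolding DK_def by (auto intro: rtrancl.rtrancl_into_rtrancl)
        then show ?thesis using False step unfolding DK_def by auto
      next
        case True
        then have zL: "z \<notin> L" using step unfolding M_def by auto
        have "y \<in> DL" using step DKL by simp
        then have "(i, z) \<in> (B \<inter> (A - L) \<times> (A - L))\<^sup>*" using step DLs zL
          unfolding DL_def by (auto intro: rtrancl.rtrancl_into_rtrancl)
        then have "z \<in> DL" using zL step unfolding DL_def by auto
        then show ?thesis using DKL by simp
      qed
    qed
    then show "{w \<in> A - M. (i, w) \<in> (B \<inter> (A - M) \<times> (A - M))\<^sup>*} \<subseteq> DK" by auto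
    have "A - K \<subseteq> A - M" unfolding M_def by auto
    then show "DK \<subseteq> {w \<in> A - M. (i, w) \<in> (B \<inter> (A - M) \<times> (A - M))\<^sup>*}"
      unfolding DK_def using rt_mono[of "A - K" "A - M" B] by auto
  qed
  have Mne: "M \<noteq> {}"
  proof
    assume "M = {}"
    then have "H \<subseteq> DK" using DM Hd by auto
    then show False using stepK(1,2) DKs by auto
  qed
  have desc_eq: "desc (A - M) (restr D (A - M)) w \<inter> DK = desc (A - K) (restr D (A - K)) w \<inter> DK"
    if w: "w \<in> DK" for w
  proof
    have sub: "A - K \<subseteq> A - M" unfolding M_def by auto
    show "desc (A - K) (restr D (A - K)) w \<inter> DK \<subseteq> desc (A - M) (restr D (A - M)) w \<inter> DK"
      unfolding desc_restr using rt_mono[OF sub, of D] sub by auto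
    have "(w, y) \<in> (D \<inter> (A - M) \<times> (A - M))\<^sup>* \<Longrightarrow> (w, y) \<in> (D \<inter> (A - K) \<times> (A - K))\<^sup>* \<or> y \<in> K" for y
    proof (induction rule: rtrancl_induct)
      case base then show ?case by simp
    next
      case (step y z)
      show ?case
      proof (cases "y \<in> K")
        case True
        have "(y, z) \<in> (D \<inter> A \<times> A)\<^sup>*" using step by auto
        then have "z = y" using sink True stepK(2) by auto
        then show ?thesis using True by simp
      next
        case False
        then have yK: "(w, y) \<in> (D \<inter> (A - K) \<times> (A - K))\<^sup>*" using step by auto
        have "y \<in> A - K" using rtrancl_in_X[OF yK] w DKs by auto
        then show ?thesis using yK step by (auto intro: rtrancl.rtrancl_into_rtrancl)
      qed
    qed
    then show "desc (A - M) (restr D (A - M)) w \<inter> DK \<subseteq> desc (A - K) (restr D (A - K)) w \<inter> DK"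
      unfolding desc_restr using DKs by auto
  qed
  have "H' = barren (A - M) (restr D (A - M)) DK"
    unfolding H'K barren_def using desc_eq by auto
  then have "H' = barren (A - M) (restr D (A - M)) (dis (A - M) (restr B (A - M)) i)"
    unfolding dis_restr DM .
  then show ?thesis
    using assms(3) Mne stepK(2) assms(5) unfolding head_step_def Let_def A_def M_def by auto
qed

end
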